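(* For $x,\theta>0$ let $d_{\rm IS}(x,\theta)=\frac{x}{\theta}-\log\frac{x}{\theta}-1$ be the Itakura–Saito distance. Let $g:[0,\infty)\to[0,\infty)$ be measurable such that $0<C:=\int_0^\infty \frac{1}{x}g(d_{\rm IS}(x,\theta))\,dx<\infty$ (this quantity does not depend on $\theta$), and consider the IS distribution $$p(x\mid\theta)=\frac{1}{C}\,\frac{1}{x}\,g\big(d_{\rm IS}(x,\theta)\big),\qquad x>0,\ \theta>0.$$ Let $f:[0,\infty)\to\mathbb{R}$ be differentiable. If $$\int_0^\infty g(t)\,|f'(t)|\,dt<\infty,$$ then for every $\theta>0$ $$\int_0^\infty p(x\mid\theta)\, f'\big(d_{\rm IS}(x,\theta)\big)\,(x-\theta)\,dx=0,$$ i.e. the estimating equation holds without any bias-correction term.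
   Context: The parameter is estimated by minimizing $\int p(x)\,f(d_{\rm IS}(x,\theta))\,dx$; since $d_{\rm IS}$ is the Bregman divergence generated by $\phi(x)=-\log x$, the stationarity condition is the displayed estimating equation, and "unbiased" means it is satisfied at the true parameter $\theta$ of the model. *)

theory Defs
  imports "HOL-Analysis.Analysis"
begin

definition d_IS :: "real \<Rightarrow> real \<Rightarrow> real" where
  "d_IS x \<theta> = x / \<theta> - ln (x / \<theta>) - 1"

definition IS_norm :: "(real \<Rightarrow> real) \<Rightarrow> real \<Rightarrow> ennreal" where
  "IS_norm g \<theta> = (\<integral>\<^sup>+ x\<in>{0<..}. ennreal ((1 / x) * g (d_IS x \<theta>)) \<partial>lborel)"

definition IS_density :: "(real \<Rightarrow> real) \<Rightarrow> real \<Rightarrow> real \<Rightarrow> real" where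
  "IS_density g \<theta> x = (1 / enn2real (IS_norm g \<theta>)) * (1 / x) * g (d_IS x \<theta>)"

end

theory Submission
  imports Defs
begin

lemma f'_meas:
  fixes f f' :: "real \<Rightarrow> real"
  assumes f_deriv: "\<And>t. t \<ge> 0 \<Longrightarrow> (f has_real_derivative f' t) (at t within {0..})"
  shows "(\<lambda>t. indicator {0<..} t * f' t) \<in> borel_measurable borel"
proof (rule borel_measurable_LIMSEQ_real)
  let ?u = "\<lambda>n t. indicator {0<..} t *\<^sub>R ((f (t + inverse (real (Suc n))) - f t) / inverse (real (Suc n)))"
  have cont: "continuous_on {0..} f"
    using f_deriv DERIV_continuous continuous_on_eq_continuous_within by fastforce
  show "?u n \<in> borel_measurable borel" for n
  proof (rule borel_measurable_continuous_on_indicator)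
    have "continuous_on {0<..} (\<lambda>t. f (t + inverse (real (Suc n))))"
      by (rule continuous_on_compose2[OF cont]) (auto intro!: continuous_intros)
    moreover have "continuous_on {0<..} f" using cont by (rule continuous_on_subset) auto
    ultimately show "continuous_on {0<..} (\<lambda>t. (f (t + inverse (real (Suc n))) - f t) / inverse (real (Suc n)))"
      by (auto intro!: continuous_intros)
  qed auto
  fix x :: real
  show "(\<lambda>n. ?u n x) \<longlonglongrightarrow> indicator {0<..} x * f' x"
  proof (cases "x > 0")
    case True
    have "(f has_real_derivative f' x) (at x within {0<..})"
      by (rule has_field_derivative_subset[OF f_deriv]) (use True in auto)
    then have d: "(f has_real_derivative f' x) (at x)"
      using at_within_open[of x "{0<..}"] True by simp
    have lim0: "filterlim (\<lambda>n. inverse (real (Suc n))) (at 0) sequentially"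
      by (rule filterlim_atI[OF LIMSEQ_inverse_real_of_nat]) auto
    have "((\<lambda>h. (f (x + h) - f x) / h) \<longlongrightarrow> f' x) (at 0)"
      using d by (simp add: DERIV_def)
    from filterlim_compose[OF this lim0]
    show ?thesis using True by simp
  qed simp
qed


theorem mainTheorem2:
  fixes g f f' :: "real \<Rightarrow> real" and \<theta> :: real
  assumes g_meas: "set_borel_measurable borel {0..} g"
    and g_nonneg: "\<And>t. t \<ge> 0 \<Longrightarrow> g t \<ge> 0"
    and C_pos: "0 < IS_norm g \<theta>"
    and C_fin: "IS_norm g \<theta> < \<infinity>"
    and f_deriv: "\<And>t. t \<ge> 0 \<Longrightarrow> (f has_real_derivative f' t) (at t within {0..})"
    and gf_int: "(\<integral>\<^sup>+ t\<in>{0..}. ennreal (g t * \<bar>f' t\<bar>) \<partial>lborel) < \<infinity>"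
    and \<theta>_pos: "\<theta> > 0"
  shows "set_integrable lborel {0<..}
           (\<lambda>x. IS_density g \<theta> x * f' (d_IS x \<theta>) * (x - \<theta>))
       \<and> (LINT x:{0<..}|lborel. IS_density g \<theta> x * f' (d_IS x \<theta>) * (x - \<theta>)) = 0"
proof -
  define \<psi> where "\<psi> x = d_IS x \<theta>" for x
  define \<psi>' where "\<psi>' x = 1/\<theta> - 1/x" for x :: real
  define h where "h t = g t * f' t" for t
  define c where "c = 1 / enn2real (IS_norm g \<theta>)"
  define S1 where "S1 = {\<theta><..}"
  define S2 where "S2 = {0<..<\<theta>}"
  have der: "(\<psi> has_real_derivative \<psi>' x) (at x)" if "x > 0" for x
    unfolding \<psi>_def \<psi>'_def d_IS_def
    using that \<theta>_pos by (auto intro!: derivative_eq_intros simp: field_simps)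
  have psi0: "\<psi> \<theta> = 0" using \<theta>_pos by (simp add: \<psi>_def d_IS_def)
  have psi_nonneg: "\<psi> x \<ge> 0" if "x > 0" for x
    using ln_le_minus_one[of "x/\<theta>"] that \<theta>_pos by (simp add: \<psi>_def d_IS_def)
  have psi_pos: "\<psi> x > 0" if "x > 0" "x \<noteq> \<theta>" for x
  proof -
    have "ln (x/\<theta>) \<noteq> x/\<theta> - 1"
    proof
      assume "ln (x/\<theta>) = x/\<theta> - 1"
      then have "x/\<theta> = 1" using ln_eq_minus_one[of "x/\<theta>"] that \<theta>_pos by simp
      then show False using that \<theta>_pos by simp
    qed
    then show ?thesis using psi_nonneg[OF that(1)] by (simp add: \<psi>_def d_IS_def)
  qed
  have cont_psi: "continuous_on {a..b} \<psi>" if "a > 0" for a b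
    by (rule DERIV_continuous_on[where D=\<psi>']) (use der that in \<open>auto intro: has_field_derivative_at_within\<close>)
  have inj1: "inj_on \<psi> S1"
  proof (rule strict_mono_on_imp_inj_on, rule strict_mono_onI)
    fix a b assume "a \<in> S1" "b \<in> S1" "a < b"
    show "\<psi> a < \<psi> b"
    proof (rule DERIV_pos_imp_increasing[OF `a < b`])
      fix x assume "a \<le> x" "x \<le> b"
      then have x: "x > \<theta>" using \<open>a \<in> S1\<close> by (simp add: S1_def)
      have "\<psi>' x > 0" unfolding \<psi>'_def using x \<theta>_pos by (simp add: field_simps)
      moreover have "DERIV \<psi> x :> \<psi>' x" using der x \<theta>_pos by simp
      ultimately show "\<exists>y. DERIV \<psi> x :> y \<and> y > 0" by blast
    qed
  qed
  have dec2: "\<psi> a > \<psi> b" if "a \<in> S2" "b \<in> S2" "a < b" for a b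
  proof (rule DERIV_neg_imp_decreasing[OF \<open>a < b\<close>])
    fix x assume "a \<le> x" "x \<le> b"
    then have x: "x < \<theta>" "x > 0" using \<open>a \<in> S2\<close> \<open>b \<in> S2\<close> by (auto simp: S2_def)
    have "\<psi>' x < 0" unfolding \<psi>'_def using x \<theta>_pos by (simp add: field_simps)
    moreover have "DERIV \<psi> x :> \<psi>' x" using der x by simp
    ultimately show "\<exists>y. DERIV \<psi> x :> y \<and> y < 0" by blast
  qed
  have inj2: "inj_on \<psi> S2"
  proof (rule inj_onI)
    fix a b assume ab: "a \<in> S2" "b \<in> S2" "\<psi> a = \<psi> b"
    show "a = b"
    proof (cases a b rule: linorder_cases)
      case less then show ?thesis using dec2[of a b] ab by simp
    next
      case greater then show ?thesis using dec2[of b a] ab by simp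
    qed
  qed
  have img1: "\<psi> ` S1 = {0<..}"
  proof
    show "\<psi> ` S1 \<subseteq> {0<..}" using psi_pos \<theta>_pos by (auto simp: S1_def)
    show "{0<..} \<subseteq> \<psi> ` S1"
    proof
      fix t :: real assume "t \<in> {0<..}"
      then have t: "t > 0" by simp
      define b where "b = \<theta> * (2*t+2)"
      have e2: "exp 1 \<ge> (2::real)" using exp_ge_add_one_self[of 1] by simp
      have "ln ((2*t+2)/exp 1) \<le> (2*t+2)/exp 1 - 1"
        by (rule ln_le_minus_one) (use t in simp)
      moreover have "ln ((2*t+2)/exp 1) = ln (2*t+2) - 1"
        using t by (simp add: ln_div)
      moreover have "(2*t+2)/exp 1 \<le> t+1"
      proof -
        have "(t+1) * 2 \<le> (t+1) * exp 1"
          by (rule mult_left_mono) (use t e2 in auto)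
        then have "2*t+2 \<le> (t+1) * exp 1" by simp
        then show ?thesis by (subst pos_divide_le_eq) auto
      qed
      ultimately have lnb: "ln (2*t+2) \<le> t+1" by linarith
      have "\<psi> b \<ge> t" using lnb \<theta>_pos t by (simp add: \<psi>_def d_IS_def b_def)
      moreover have "\<theta> \<le> b" using \<theta>_pos t by (simp add: b_def)
      ultimately obtain x where x: "\<theta> \<le> x" "x \<le> b" "\<psi> x = t"
        using IVT'[of \<psi> \<theta> t b] cont_psi[OF \<theta>_pos, of b] psi0 t by auto
      then have "x \<noteq> \<theta>" using psi0 t by auto
      with x have "x \<in> S1" by (simp add: S1_def)
      with x show "t \<in> \<psi> ` S1" by auto
    qed
  qed
  have img2: "\<psi> ` S2 = {0<..}"
  proof
    show "\<psi> ` S2 \<subseteq> {0<..}" using psi_pos \<theta>_pos by (auto simp: S2_def)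
    show "{0<..} \<subseteq> \<psi> ` S2"
    proof
      fix t :: real assume "t \<in> {0<..}"
      then have t: "t > 0" by simp
      define a where "a = \<theta> * exp (-(t+1))"
      have a0: "a > 0" using \<theta>_pos by (simp add: a_def)
      have "exp (-(t+1)) < 1" using t by simp
      then have at: "a < \<theta>" using \<theta>_pos by (simp add: a_def)
      have "\<psi> a = exp (-(t+1)) + t" using \<theta>_pos by (simp add: \<psi>_def d_IS_def a_def)
      then have "\<psi> a \<ge> t" by simp
      then obtain x where x: "a \<le> x" "x \<le> \<theta>" "\<psi> x = t"
        using IVT2'[of \<psi> \<theta> t a] cont_psi[OF a0, of \<theta>] psi0 t at by auto
      then have "x \<noteq> \<theta>" using psi0 t by auto
      with x a0 have "x \<in> S2" by (simp add: S2_def)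
      with x show "t \<in> \<psi> ` S2" by auto
    qed
  qed
  have G_meas: "(\<lambda>t. indicator {0..} t * g t) \<in> borel_measurable borel"
    using g_meas unfolding set_borel_measurable_def by simp
  have F_meas: "(\<lambda>t. indicator {0<..} t * f' t) \<in> borel_measurable borel"
    by (rule f'_meas[OF f_deriv])
  have H_eq: "(\<lambda>t. indicator {0<..} t *\<^sub>R h t) = (\<lambda>t. (indicator {0..} t * g t) * (indicator {0<..} t * f' t))"
    by (auto simp: h_def fun_eq_iff split: split_indicator)
  have H_meas: "(\<lambda>t. indicator {0<..} t *\<^sub>R h t) \<in> borel_measurable borel"
    unfolding H_eq using G_meas F_meas by (rule borel_measurable_times)
  have h_int: "set_integrable lborel {0<..} h"
    unfolding set_integrable_def
  proof (rule integrableI_bounded)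
    show "(\<lambda>t. indicator {0<..} t *\<^sub>R h t) \<in> borel_measurable lborel"
      using H_meas by simp
    have "(\<integral>\<^sup>+ x. ennreal (norm (indicator {0<..} x *\<^sub>R h x)) \<partial>lborel)
        \<le> (\<integral>\<^sup>+ t\<in>{0..}. ennreal (g t * \<bar>f' t\<bar>) \<partial>lborel)"
    proof (rule nn_integral_mono)
      fix t :: real
      show "ennreal (norm (indicator {0<..} t *\<^sub>R h t)) \<le> ennreal (g t * \<bar>f' t\<bar>) * indicator {0..} t"
        using g_nonneg[of t] by (auto simp: h_def abs_mult split: split_indicator)
    qed
    then show "(\<integral>\<^sup>+ x. ennreal (norm (indicator {0<..} x *\<^sub>R h x)) \<partial>lborel) < \<infinity>"
      using gf_int by (rule le_less_trans)
  qed
  have h_abs: "h absolutely_integrable_on {0<..}"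
    unfolding set_integrable_def
    by (subst integrable_completion) (use H_meas h_int in \<open>auto simp: set_integrable_def\<close>)
  define I where "I = integral {0<..} h"
  define A where "A x = \<bar>\<psi>' x\<bar> * h (\<psi> x)" for x
  have der1: "(\<psi> has_field_derivative \<psi>' x) (at x within S1)" if "x \<in> S1" for x
  proof -
    have "x > 0" using that \<theta>_pos by (simp add: S1_def)
    then show ?thesis by (rule has_field_derivative_at_within[OF der])
  qed
  have der2: "(\<psi> has_field_derivative \<psi>' x) (at x within S2)" if "x \<in> S2" for x
  proof -
    have "x > 0" using that by (simp add: S2_def)
    then show ?thesis by (rule has_field_derivative_at_within[OF der])
  qed
  have S1_leb: "S1 \<in> sets lebesgue" by (simp add: S1_def)
  have S2_leb: "S2 \<in> sets lebesgue" by (simp add: S2_def)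
  have hI1: "h absolutely_integrable_on \<psi> ` S1 \<and> integral (\<psi> ` S1) h = I"
    unfolding img1 I_def using h_abs by simp
  have hI2: "h absolutely_integrable_on \<psi> ` S2 \<and> integral (\<psi> ` S2) h = I"
    unfolding img2 I_def using h_abs by simp
  have cov1: "A absolutely_integrable_on S1 \<and> integral S1 A = I"
    unfolding A_def
    using has_absolute_integral_change_of_variables_1'[of S1 \<psi> \<psi>' h I] S1_leb der1 inj1 hI1 by blast
  have cov2: "A absolutely_integrable_on S2 \<and> integral S2 A = I"
    unfolding A_def
    using has_absolute_integral_change_of_variables_1'[of S2 \<psi> \<psi>' h I] S2_leb der2 inj2 hI2 by blast
  have L1: "(LINT x:S1|lebesgue. A x) = I"
    using cov1 set_lebesgue_integral_eq_integral(2) by metis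
  have L2: "(LINT x:S2|lebesgue. A x) = I"
    using cov2 set_lebesgue_integral_eq_integral(2) by metis
  have dens: "IS_density g \<theta> x = c * (1/x) * g (\<psi> x)" for x
    by (simp add: IS_density_def c_def \<psi>_def)
  define T where "T x = IS_density g \<theta> x * f' (d_IS x \<theta>) * (x - \<theta>)" for x
  have T_eq: "(\<lambda>x. indicator {0<..} x *\<^sub>R T x)
     = (\<lambda>x. (c*\<theta>) * (indicator S1 x *\<^sub>R A x) - (c*\<theta>) * (indicator S2 x *\<^sub>R A x))"
  proof
    fix x :: real
    consider "x \<le> 0" | "0 < x" "x < \<theta>" | "x = \<theta>" | "x > \<theta>" by linarith
    then show "indicator {0<..} x *\<^sub>R T x
       = (c*\<theta>) * (indicator S1 x *\<^sub>R A x) - (c*\<theta>) * (indicator S2 x *\<^sub>R A x)"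
    proof cases
      case 1 then show ?thesis using \<theta>_pos by (simp add: S1_def S2_def indicator_def)
    next
      case 2
      then have "1/\<theta> < 1/x" using \<theta>_pos by (simp add: field_simps)
      then have ab: "\<bar>\<psi>' x\<bar> = 1/x - 1/\<theta>" by (simp add: \<psi>'_def)
      show ?thesis using 2 \<theta>_pos
        by (simp add: S1_def S2_def indicator_def T_def A_def dens ab h_def \<psi>_def field_simps)
    next
      case 3 then show ?thesis using \<theta>_pos by (simp add: S1_def S2_def indicator_def T_def)
    next
      case 4
      then have "1/x < 1/\<theta>" using \<theta>_pos by (simp add: field_simps)
      then have ab: "\<bar>\<psi>' x\<bar> = 1/\<theta> - 1/x" by (simp add: \<psi>'_def)
      show ?thesis using 4 \<theta>_pos
        by (simp add: S1_def S2_def indicator_def T_def A_def dens ab h_def \<psi>_def field_simps)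
    qed
  qed
  have psi_meas: "\<psi> \<in> borel_measurable borel"
    unfolding \<psi>_def d_IS_def by measurable
  have GC: "(\<lambda>x. indicator {0..} (\<psi> x) * g (\<psi> x)) \<in> borel_measurable borel"
    using measurable_compose[OF psi_meas G_meas] by simp
  have FC: "(\<lambda>x. indicator {0<..} (\<psi> x) * f' (\<psi> x)) \<in> borel_measurable borel"
    using measurable_compose[OF psi_meas F_meas] by simp
  have T_eq2: "(\<lambda>x. indicator {0<..} x *\<^sub>R T x) = (\<lambda>x. c * (indicator {0<..} x * (1/x))
      * (indicator {0..} (\<psi> x) * g (\<psi> x)) * (indicator {0<..} (\<psi> x) * f' (\<psi> x)) * (x - \<theta>))"
  proof
    fix x :: real
    consider "x \<le> 0" | "0 < x" "x \<noteq> \<theta>" | "x = \<theta>" by linarith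
    then show "indicator {0<..} x *\<^sub>R T x = c * (indicator {0<..} x * (1/x))
      * (indicator {0..} (\<psi> x) * g (\<psi> x)) * (indicator {0<..} (\<psi> x) * f' (\<psi> x)) * (x - \<theta>)"
    proof cases
      case 1 then show ?thesis by (simp add: indicator_def)
    next
      case 2
      then have "\<psi> x > 0" using psi_pos by simp
      then show ?thesis using 2
        by (simp add: indicator_def T_def dens \<psi>_def)
    next
      case 3 then show ?thesis by (simp add: T_def)
    qed
  qed
  have T_meas: "(\<lambda>x. indicator {0<..} x *\<^sub>R T x) \<in> borel_measurable borel"
    unfolding T_eq2 using GC FC by measurable
  have T_leb: "integrable lebesgue (\<lambda>x. indicator {0<..} x *\<^sub>R T x)"
  proof -
    have i1: "integrable lebesgue (\<lambda>x. indicator S1 x *\<^sub>R A x)"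
      using cov1 by (simp add: set_integrable_def)
    have i2: "integrable lebesgue (\<lambda>x. indicator S2 x *\<^sub>R A x)"
      using cov2 by (simp add: set_integrable_def)
    show ?thesis unfolding T_eq
      using i1 i2 by (intro Bochner_Integration.integrable_diff integrable_mult_right) auto
  qed
  have T_meas': "(\<lambda>x. indicator {0<..} x *\<^sub>R T x) \<in> borel_measurable lborel"
    using T_meas by (simp only: measurable_lborel2)
  have T_int: "integrable lborel (\<lambda>x. indicator {0<..} x *\<^sub>R T x)"
    using integrable_completion[OF T_meas'] T_leb by blast
  have "integral\<^sup>L lborel (\<lambda>x. indicator {0<..} x *\<^sub>R T x) = integral\<^sup>L lebesgue (\<lambda>x. indicator {0<..} x *\<^sub>R T x)"
    using integral_completion[OF T_meas'] by (rule sym)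
  also have "\<dots> = (c*\<theta>) * (LINT x:S1|lebesgue. A x) - (c*\<theta>) * (LINT x:S2|lebesgue. A x)"
  proof -
    have i1: "integrable lebesgue (\<lambda>x. indicator S1 x *\<^sub>R A x)"
      using cov1 by (simp add: set_integrable_def)
    have i2: "integrable lebesgue (\<lambda>x. indicator S2 x *\<^sub>R A x)"
      using cov2 by (simp add: set_integrable_def)
    show ?thesis
      unfolding T_eq set_lebesgue_integral_def
      using Bochner_Integration.integral_diff[OF integrable_mult_right[OF i1] integrable_mult_right[OF i2], of "c*\<theta>" "c*\<theta>"]
      by simp
  qed
  also have "\<dots> = 0" using L1 L2 by simp
  finally have int0: "integral\<^sup>L lborel (\<lambda>x. indicator {0<..} x *\<^sub>R T x) = 0" .
  show ?thesis
    using T_int int0 unfolding set_integrable_def set_lebesgue_integral_def T_def by blast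
qed

end
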